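(* Let $r(x)=e^{x^2/2}\int_x^\infty e^{-t^2/2}\,dt$ for $x\in\mathbb{R}$. Then: (a) On $(0,\infty)$, the function $x\mapsto x^\alpha r(x)$ is decreasing for $\alpha=0$, increasing for $\alpha=1$, and increasing then decreasing for $\alpha\in(0,1)$. (b) On $(0,\infty)$, the function $x\mapsto x^\alpha r'(x)$ is increasing for $\alpha=0$, decreasing for $\alpha=2$, and decreasing then increasing for $\alpha\in(0,2)$.
   Context: $r$ is Mill's ratio of the standard Gaussian law. *)

theory Defs
  imports "HOL-Analysis.Analysis"
begin

definition mills :: "real \<Rightarrow> real" where
  "mills x = exp (x\<^sup>2 / 2) * integral {x..} (\<lambda>t. exp (- (t\<^sup>2) / 2))"

end

theory Submission
  imports Defs "HOL-Real_Asymp.Real_Asymp"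
begin

definition g0 :: "real \<Rightarrow> real" where "g0 t = exp (- (t\<^sup>2) / 2)"

lemma g0_le: "g0 t \<le> exp (-1 * t) * exp (1/2)"
proof -
  have "0 \<le> (t - 1) * (t - 1)" by simp
  then have "- (t\<^sup>2) / 2 \<le> -1 * t + 1/2" by (simp add: power2_eq_square algebra_simps)
  then show ?thesis unfolding g0_def by (simp add: exp_add[symmetric])
qed

lemma g0_pos: "g0 t > 0" by (simp add: g0_def)

lemma g0_cont: "continuous_on S g0" unfolding g0_def by (intro continuous_intros) auto

lemma g0_int: "g0 integrable_on {a..}"
proof (rule integrable_on_all_intervals_integrable_bound[where g="\<lambda>t. exp (-1 * t) * exp (1/2)"])
  fix u v :: real
  have "g0 integrable_on ({a..} \<inter> cbox u v)"
  proof -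
    have "{a..} \<inter> cbox u v = {max a u..v}" by auto
    then show ?thesis using integrable_continuous_interval[OF g0_cont] by simp
  qed
  then show "(\<lambda>x. if x \<in> {a..} then g0 x else 0) integrable_on cbox u v"
    using integrable_restrict_Int by blast
next
  fix x show "norm (g0 x) \<le> exp (-1 * x) * exp (1/2)" using g0_le g0_pos[of x] by simp
next
  show "(\<lambda>t. exp (-1 * t) * exp (1/2)) integrable_on {a..}"
    using integrable_on_exp_minus_to_infinity[of 1 a] by (intro integrable_on_mult_left) auto
qed

lemma Q_split: "a \<le> b \<Longrightarrow> integral {a..} g0 = integral {a..b} g0 + integral {b..} g0"
proof -
  assume "a \<le> b"
  have "{a..} = {a..b} \<union> {b..}" using \<open>a \<le> b\<close> by auto
  moreover have "negligible ({a..b} \<inter> {b..})"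
    by (rule negligible_subset[of "{b}"]) auto
  ultimately show ?thesis
    using integral_Un[of g0 "{a..b}" "{b..}"] integrable_continuous_interval[OF g0_cont] g0_int by auto
qed

lemma Q_deriv: "((\<lambda>x. integral {x..} g0) has_real_derivative - g0 x) (at x)"
proof -
  let ?a = "x - 1" and ?b = "x + 1"
  have "((\<lambda>y. integral {y..?b} g0) has_real_derivative - g0 x) (at x within {?a..?b})"
    by (rule integral_has_real_derivative') (auto intro: g0_cont)
  then have d: "((\<lambda>y. integral {y..?b} g0) has_real_derivative - g0 x) (at x)"
    using at_within_Icc_at[of ?a x ?b] by simp
  have "((\<lambda>y. integral {y..?b} g0 + integral {?b..} g0) has_real_derivative - g0 x) (at x)"
    using d by (auto intro!: derivative_eq_intros)
  then show ?thesis
  proof (rule has_field_derivative_transform_within_open[where S="{..<?b}"])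
  fix y assume "y \<in> {..<x + 1}" then show "integral {y..x + 1} g0 + integral {x + 1..} g0 = integral {y..} g0"
    using Q_split[of y "x+1"] by simp
  qed auto
qed

lemma Q_lim: "((\<lambda>x. integral {x..} g0) \<longlongrightarrow> 0) at_top"
proof (rule tendsto_sandwich[where f="\<lambda>_. 0" and h="\<lambda>x. exp (-1 * x) * exp (1/2)"])
  show "\<forall>\<^sub>F x in at_top. 0 \<le> integral {x..} g0"
    by (intro always_eventually allI integral_nonneg g0_int) (simp add: less_imp_le g0_pos)
  have "integral {x..} g0 \<le> exp (-1 * x) * exp (1/2)" for x
  proof -
    have "integral {x..} g0 \<le> integral {x..} (\<lambda>t. exp (-1 * t) * exp (1/2))"
      using integrable_on_exp_minus_to_infinity[of 1 x]
      by (intro integral_le g0_int g0_le integrable_on_mult_left) auto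
    also have "\<dots> = exp (-1 * x) * exp (1/2)"
      using has_integral_exp_minus_to_infinity[of 1 x]
      by (simp add: integral_mult_left integral_unique)
    finally show ?thesis .
  qed
  then show "\<forall>\<^sub>F x in at_top. integral {x..} g0 \<le> exp (-1 * x) * exp (1/2)" by simp
  show "((\<lambda>x. exp (-1 * x) * exp (1/2::real)) \<longlongrightarrow> 0) at_top" by real_asymp
qed simp

lemma mills_eq: "mills x = exp (x\<^sup>2 / 2) * integral {x..} g0"
  unfolding mills_def g0_def[abs_def] ..

lemma mills_deriv: "(mills has_real_derivative (x * mills x - 1)) (at x)"
proof -
  have "((\<lambda>x. exp (x\<^sup>2 / 2) * integral {x..} g0) has_real_derivative
     exp (x\<^sup>2 / 2) * (2 * x / 2) * integral {x..} g0 + exp (x\<^sup>2 / 2) * (- g0 x)) (at x)"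
    by (auto intro!: derivative_eq_intros Q_deriv)
  moreover have "exp (x\<^sup>2 / 2) * (2 * x / 2) * integral {x..} g0 + exp (x\<^sup>2 / 2) * (- g0 x)
     = x * mills x - 1"
    by (simp add: mills_eq g0_def exp_minus[symmetric] exp_add[symmetric])
  ultimately show ?thesis unfolding mills_eq[abs_def] by (simp add: mult_ac)
qed

lemma deriv_mills: "deriv mills = (\<lambda>x. x * mills x - 1)"
  using mills_deriv DERIV_imp_deriv by blast

lemma mills_Q: "exp (- (x\<^sup>2) / 2) * mills x = integral {x..} g0"
  by (simp add: mills_eq exp_minus[symmetric] exp_add[symmetric])

lemma tail_neg:
  fixes H H' :: "real \<Rightarrow> real"
  assumes d: "\<And>x. x > a \<Longrightarrow> (H has_real_derivative H' x) (at x)"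
    and p: "\<And>x. x > a \<Longrightarrow> H' x > 0"
    and l: "(H \<longlongrightarrow> 0) at_top"
    and x: "x > a"
  shows "H x < 0"
proof -
  have inc: "H u < H v" if "a < u" "u < v" for u v
  proof (rule DERIV_pos_imp_increasing[OF that(2)])
    fix t assume "u \<le> t" "t \<le> v"
    then have "t > a" using that by simp
    then show "\<exists>y. DERIV H t :> y \<and> 0 < y" using d p by blast
  qed
  have "H (x+1) \<le> 0"
  proof (rule tendsto_lowerbound[OF l])
    show "\<forall>\<^sub>F t in at_top. H (x+1) \<le> H t"
      unfolding eventually_at_top_linorder
    proof (intro exI allI impI)
      fix t assume "x + 1 \<le> t"
      then show "H (x+1) \<le> H t" using inc[of "x+1" t] x by (cases "t = x+1") auto
    qed
  qed simp
  moreover have "H x < H (x+1)" using inc x by simp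
  ultimately show ?thesis by simp
qed

lemma tail_pos:
  fixes H H' :: "real \<Rightarrow> real"
  assumes d: "\<And>x. x > a \<Longrightarrow> (H has_real_derivative H' x) (at x)"
    and p: "\<And>x. x > a \<Longrightarrow> H' x < 0"
    and l: "(H \<longlongrightarrow> 0) at_top"
    and x: "x > a"
  shows "H x > 0"
proof -
  have "(\<lambda>x. - H x) x < 0"
    by (rule tail_neg[where H'="\<lambda>x. - H' x" and a=a]) 
       (use d p l x in \<open>auto intro!: derivative_eq_intros tendsto_minus_cancel_left[THEN iffD1]\<close>)
  then show ?thesis by simp
qed

lemma mills_pos: "mills x > 0"
proof -
  have "integral {x..} g0 > 0"
    by (rule tail_pos[where a="x - 1" and H'="\<lambda>x. - g0 x"]) (auto intro: Q_deriv Q_lim g0_pos)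
  then show ?thesis by (simp add: mills_eq)
qed

lemma smono_deriv:
  fixes f f' :: "real \<Rightarrow> real"
  assumes d: "\<And>x y t. x \<in> S \<Longrightarrow> y \<in> S \<Longrightarrow> x \<le> t \<Longrightarrow> t \<le> y \<Longrightarrow> (f has_real_derivative f' t) (at t)"
    and p: "\<And>x y t. x \<in> S \<Longrightarrow> y \<in> S \<Longrightarrow> x < t \<Longrightarrow> t < y \<Longrightarrow> f' t > 0"
  shows "strict_mono_on S f"
proof (intro monotone_onI)
  fix x y assume xy: "x \<in> S" "y \<in> S" "x < y"
  show "f x < f y"
  proof (rule DERIV_pos_imp_increasing_open[OF xy(3)])
    show "continuous_on {x..y} f"
      by (intro continuous_at_imp_continuous_on ballI DERIV_isCont) (use d xy in auto)
  next
    fix t assume "x < t" "t < y"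
    then show "\<exists>z. DERIV f t :> z \<and> z > 0"
      by (intro exI[of _ "f' t"] conjI d[OF xy(1,2)] p[OF xy(1,2)]) auto
  qed
qed

lemma santimono_deriv:
  fixes f f' :: "real \<Rightarrow> real"
  assumes d: "\<And>x y t. x \<in> S \<Longrightarrow> y \<in> S \<Longrightarrow> x \<le> t \<Longrightarrow> t \<le> y \<Longrightarrow> (f has_real_derivative f' t) (at t)"
    and p: "\<And>x y t. x \<in> S \<Longrightarrow> y \<in> S \<Longrightarrow> x < t \<Longrightarrow> t < y \<Longrightarrow> f' t < 0"
  shows "strict_antimono_on S f"
proof (intro monotone_onI)
  fix x y assume xy: "x \<in> S" "y \<in> S" "x < y"
  show "f y < f x"
  proof (rule DERIV_neg_imp_decreasing_open[OF xy(3)])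
    show "continuous_on {x..y} f"
      by (intro continuous_at_imp_continuous_on ballI DERIV_isCont) (use d xy in auto)
  next
    fix t assume "x < t" "t < y"
    then show "\<exists>z. DERIV f t :> z \<and> z < 0"
      by (intro exI[of _ "f' t"] conjI d[OF xy(1,2)] p[OF xy(1,2)]) auto
  qed
qed

lemma exp_cancel: "exp ((x::real)\<^sup>2 / 2) * exp (- (x\<^sup>2) / 2) = 1"
  by (simp add: exp_add[symmetric])

lemma H_deriv:
  assumes "(v has_real_derivative v') (at x)"
  shows "((\<lambda>x. exp (- (x\<^sup>2) / 2) * (mills x - v x)) has_real_derivative
           exp (- (x\<^sup>2) / 2) * (x * v x - 1 - v')) (at x)"
  by (auto intro!: derivative_eq_intros mills_deriv assms simp: algebra_simps)

lemma H_lim: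
  assumes "((\<lambda>x. exp (- (x\<^sup>2) / 2) * v x) \<longlongrightarrow> 0) at_top"
  shows "((\<lambda>x. exp (- (x\<^sup>2) / 2) * (mills x - v x)) \<longlongrightarrow> 0) at_top"
proof -
  have "((\<lambda>x. integral {x..} g0 - exp (- (x\<^sup>2) / 2) * v x) \<longlongrightarrow> 0 - 0) at_top"
    by (intro tendsto_diff Q_lim assms)
  then show ?thesis unfolding mills_Q[symmetric] by (simp add: right_diff_distrib)
qed

definition Ha :: "real \<Rightarrow> real \<Rightarrow> real" where
  "Ha a x = exp (- (x\<^sup>2) / 2) * (mills x - x / (a + x\<^sup>2))"

definition Hb :: "real \<Rightarrow> real \<Rightarrow> real" where
  "Hb a x = exp (- (x\<^sup>2) / 2) * (mills x - (a + x\<^sup>2) / (x * (1 + a + x\<^sup>2)))"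

lemma Ha_deriv:
  assumes "a + x\<^sup>2 \<noteq> 0"
  shows "(Ha a has_real_derivative exp (- (x\<^sup>2) / 2) * ((x\<^sup>2 * (1 - a) - a * (1 + a)) / (a + x\<^sup>2)\<^sup>2)) (at x)"
proof -
  have dv: "((\<lambda>x. x / (a + x\<^sup>2)) has_real_derivative ((a + x\<^sup>2) - x * (2 * x)) / (a + x\<^sup>2)\<^sup>2) (at x)"
    using assms by (auto intro!: derivative_eq_intros simp: power2_eq_square)
  have e1: "\<And>d::real. d \<noteq> 0 \<Longrightarrow> x * (x / d) - 1 - (d - x * (2 * x)) / d\<^sup>2
      = (x\<^sup>2 * d - d\<^sup>2 - d + 2 * x\<^sup>2) / d\<^sup>2"
    by (simp add: field_simps power2_eq_square)
  have e2: "x\<^sup>2 * (a + x\<^sup>2) - (a + x\<^sup>2)\<^sup>2 - (a + x\<^sup>2) + 2 * x\<^sup>2 = x\<^sup>2 * (1 - a) - a * (1 + a)"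
    by (simp add: algebra_simps power2_eq_square)
  have "x * (x / (a + x\<^sup>2)) - 1 - ((a + x\<^sup>2) - x * (2 * x)) / (a + x\<^sup>2)\<^sup>2
      = (x\<^sup>2 * (1 - a) - a * (1 + a)) / (a + x\<^sup>2)\<^sup>2"
    using e1[OF assms] e2 by simp
  with H_deriv[OF dv] show ?thesis unfolding Ha_def[abs_def] by simp
qed

lemma Hb_deriv:
  assumes "x > 0" "a \<ge> 0"
  shows "(Hb a has_real_derivative exp (- (x\<^sup>2) / 2) * ((a * (1 + a) - (2 - a) * x\<^sup>2) / (x\<^sup>2 * (1 + a + x\<^sup>2)\<^sup>2))) (at x)"
proof -
  have "0 \<le> x\<^sup>2" by simp
  then have "1 + a + x\<^sup>2 > 0" using assms by linarith
  then have nz: "x * (1 + a + x\<^sup>2) \<noteq> 0" using assms by simp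
  have dv: "((\<lambda>x. (a + x\<^sup>2) / (x * (1 + a + x\<^sup>2))) has_real_derivative
      ((2 * x) * (x * (1 + a + x\<^sup>2)) - (a + x\<^sup>2) * ((1 + a + x\<^sup>2) + x * (2 * x))) / (x * (1 + a + x\<^sup>2))\<^sup>2) (at x)"
    using nz by (auto intro!: derivative_eq_intros simp: power2_eq_square)
  have e1: "\<And>d::real. d \<noteq> 0 \<Longrightarrow> x * ((a + x\<^sup>2) / d) - 1 -
      ((2 * x) * d - (a + x\<^sup>2) * ((1 + a + x\<^sup>2) + x * (2 * x))) / d\<^sup>2
      = (x * (a + x\<^sup>2) * d - d\<^sup>2 - 2 * x * d + (a + x\<^sup>2) * (1 + a + 3 * x\<^sup>2)) / d\<^sup>2"
    by (simp add: field_simps power2_eq_square)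
  have e2: "x * (a + x\<^sup>2) * (x * (1 + a + x\<^sup>2)) - (x * (1 + a + x\<^sup>2))\<^sup>2 - 2 * x * (x * (1 + a + x\<^sup>2))
     + (a + x\<^sup>2) * (1 + a + 3 * x\<^sup>2) = a * (1 + a) - (2 - a) * x\<^sup>2"
    by (simp add: algebra_simps power2_eq_square)
  have "x * ((a + x\<^sup>2) / (x * (1 + a + x\<^sup>2))) - 1 -
      ((2 * x) * (x * (1 + a + x\<^sup>2)) - (a + x\<^sup>2) * ((1 + a + x\<^sup>2) + x * (2 * x))) / (x * (1 + a + x\<^sup>2))\<^sup>2
      = (a * (1 + a) - (2 - a) * x\<^sup>2) / (x\<^sup>2 * (1 + a + x\<^sup>2)\<^sup>2)"
    using e1[OF nz] e2 by (simp add: power_mult_distrib)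
  with H_deriv[OF dv] show ?thesis unfolding Hb_def[abs_def] by simp
qed

lemma Ha_lim: "(Ha a \<longlongrightarrow> 0) at_top"
  unfolding Ha_def[abs_def] by (rule H_lim) real_asymp

lemma Hb_lim: "(Hb a \<longlongrightarrow> 0) at_top"
  unfolding Hb_def[abs_def] by (rule H_lim) real_asymp

lemma exp_Ha: "exp (x\<^sup>2 / 2) * Ha a x = mills x - x / (a + x\<^sup>2)"
  unfolding Ha_def mult.assoc[symmetric] exp_cancel by simp

lemma exp_Hb: "exp (x\<^sup>2 / 2) * Hb a x = mills x - (a + x\<^sup>2) / (x * (1 + a + x\<^sup>2))"
  unfolding Hb_def mult.assoc[symmetric] exp_cancel by simp

lemma powr_split: "(x::real) > 0 \<Longrightarrow> x powr a = x powr (a - 1) * x"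
proof -
  assume "x > 0"
  have "x powr a = x powr ((a - 1) + 1)" by simp
  also have "\<dots> = x powr (a - 1) * x powr 1" by (rule powr_add)
  also have "x powr 1 = x" using \<open>x > 0\<close> by simp
  finally show ?thesis .
qed

lemma fa_deriv:
  assumes "x > 0" "a \<ge> 0"
  shows "((\<lambda>x. x powr a * mills x) has_real_derivative x powr (a - 1) * (a + x\<^sup>2) * exp (x\<^sup>2 / 2) * Ha a x) (at x)"
proof -
  have d: "((\<lambda>x. x powr a * mills x) has_real_derivative x powr a * (x * mills x - 1) + (a * x powr (a - 1)) * mills x) (at x)"
    by (rule DERIV_mult'[OF has_real_derivative_powr[OF assms(1)] mills_deriv])
  have "0 < x\<^sup>2" using assms by simp
  then have nz: "a + x\<^sup>2 \<noteq> 0" using assms by linarith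
  have "x powr (a - 1) * (a + x\<^sup>2) * exp (x\<^sup>2 / 2) * Ha a x = x powr (a - 1) * (a + x\<^sup>2) * (mills x - x / (a + x\<^sup>2))"
    using exp_Ha[of x a] by (simp add: mult.assoc)
  also have "\<dots> = x powr (a - 1) * ((a + x\<^sup>2) * mills x - x)"
    using nz by (simp add: field_simps)
  also have "\<dots> = x powr a * (x * mills x - 1) + (a * x powr (a - 1)) * mills x"
    using powr_split[OF assms(1), of a] by (simp add: algebra_simps power2_eq_square)
  finally show ?thesis using d by simp
qed

lemma fb_deriv:
  assumes "x > 0" "a \<ge> 0"
  shows "((\<lambda>x. x powr a * deriv mills x) has_real_derivative x powr (a - 1) * (x * (1 + a + x\<^sup>2)) * exp (x\<^sup>2 / 2) * Hb a x) (at x)"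
proof -
  have d: "((\<lambda>x. x powr a * (x * mills x - 1)) has_real_derivative x powr a * (x * (x * mills x - 1) + 1 * mills x - 0) + (a * x powr (a - 1)) * (x * mills x - 1)) (at x)"
    by (rule DERIV_mult'[OF has_real_derivative_powr[OF assms(1)] DERIV_diff[OF DERIV_mult'[OF DERIV_ident mills_deriv] DERIV_const]])
  have "0 \<le> x\<^sup>2" by simp
  then have "1 + a + x\<^sup>2 > 0" using assms by linarith
  then have nz: "x * (1 + a + x\<^sup>2) \<noteq> 0" using assms by simp
  have "x powr (a - 1) * (x * (1 + a + x\<^sup>2)) * exp (x\<^sup>2 / 2) * Hb a x = x powr (a - 1) * (x * (1 + a + x\<^sup>2)) * (mills x - (a + x\<^sup>2) / (x * (1 + a + x\<^sup>2)))"
    using exp_Hb[of x a] by (simp add: mult.assoc)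
  also have "\<dots> = x powr (a - 1) * ((x * (1 + a + x\<^sup>2)) * mills x - (a + x\<^sup>2))"
    using nz by (simp add: right_diff_distrib)
  also have "\<dots> = x powr a * (x * (x * mills x - 1) + 1 * mills x - 0) + (a * x powr (a - 1)) * (x * mills x - 1)"
    using powr_split[OF assms(1), of a] by (simp add: algebra_simps power2_eq_square)
  finally show ?thesis using d unfolding deriv_mills by simp
qed

lemma fa_sign: "(x::real) > 0 \<Longrightarrow> a \<ge> 0 \<Longrightarrow> 0 < x powr (a - 1) * (a + x\<^sup>2) * exp (x\<^sup>2 / 2)"
  by (simp add: add_nonneg_pos)

lemma fb_sign: "(x::real) > 0 \<Longrightarrow> a \<ge> 0 \<Longrightarrow> 0 < x powr (a - 1) * (x * (1 + a + x\<^sup>2)) * exp (x\<^sup>2 / 2)"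
proof -
  assume "x > 0" "a \<ge> 0"
  moreover have "0 \<le> x\<^sup>2" by simp
  ultimately have "1 + a + x\<^sup>2 > 0" by linarith
  then show ?thesis using \<open>x > 0\<close> by simp
qed

lemma Sa0: "x > 0 \<Longrightarrow> Ha 0 x < 0"
proof (rule tail_neg[where H="Ha 0" and x=x and a=0 and H'="\<lambda>x. exp (- (x\<^sup>2) / 2) * ((x\<^sup>2 * (1 - 0) - 0 * (1 + 0)) / (0 + x\<^sup>2)\<^sup>2)"])
  fix t :: real assume "t > 0"
  then show "(Ha 0 has_real_derivative exp (- (t\<^sup>2) / 2) * ((t\<^sup>2 * (1 - 0) - 0 * (1 + 0)) / (0 + t\<^sup>2)\<^sup>2)) (at t)"
    by (intro Ha_deriv) simp
  show "0 < exp (- (t\<^sup>2) / 2) * ((t\<^sup>2 * (1 - 0) - 0 * (1 + 0)) / (0 + t\<^sup>2)\<^sup>2)"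
    using \<open>t > 0\<close> by simp
qed (auto intro: Ha_lim)

lemma Sa1: "x > 0 \<Longrightarrow> Ha 1 x > 0"
proof (rule tail_pos[where H="Ha 1" and x=x and a=0 and H'="\<lambda>x. exp (- (x\<^sup>2) / 2) * ((x\<^sup>2 * (1 - 1) - 1 * (1 + 1)) / (1 + x\<^sup>2)\<^sup>2)"])
  fix t :: real assume "t > 0"
  have "0 \<le> t\<^sup>2" by simp
  then have "1 + t\<^sup>2 \<noteq> 0" by linarith
  then show "(Ha 1 has_real_derivative exp (- (t\<^sup>2) / 2) * ((t\<^sup>2 * (1 - 1) - 1 * (1 + 1)) / (1 + t\<^sup>2)\<^sup>2)) (at t)"
    by (intro Ha_deriv)
  show "exp (- (t\<^sup>2) / 2) * ((t\<^sup>2 * (1 - 1) - 1 * (1 + 1)) / (1 + t\<^sup>2)\<^sup>2) < 0"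
    using \<open>1 + t\<^sup>2 \<noteq> 0\<close> by (simp add: mult_pos_neg divide_neg_pos)
qed (auto intro: Ha_lim)

lemma Sb0: "x > 0 \<Longrightarrow> Hb 0 x > 0"
proof (rule tail_pos[where H="Hb 0" and x=x and a=0 and H'="\<lambda>x. exp (- (x\<^sup>2) / 2) * ((0 * (1 + 0) - (2 - 0) * x\<^sup>2) / (x\<^sup>2 * (1 + 0 + x\<^sup>2)\<^sup>2))"])
  fix t :: real assume "t > 0"
  then show "(Hb 0 has_real_derivative exp (- (t\<^sup>2) / 2) * ((0 * (1 + 0) - (2 - 0) * t\<^sup>2) / (t\<^sup>2 * (1 + 0 + t\<^sup>2)\<^sup>2))) (at t)"
    by (intro Hb_deriv) simp_all
  have "0 \<le> t\<^sup>2" by simp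
  then have "1 + t\<^sup>2 > 0" by linarith
  then have "(0 * (1 + 0) - (2 - 0) * t\<^sup>2) / (t\<^sup>2 * (1 + 0 + t\<^sup>2)\<^sup>2) < 0"
    using \<open>t > 0\<close> by (intro divide_neg_pos) simp_all
  then show "exp (- (t\<^sup>2) / 2) * ((0 * (1 + 0) - (2 - 0) * t\<^sup>2) / (t\<^sup>2 * (1 + 0 + t\<^sup>2)\<^sup>2)) < 0"
    by (intro mult_pos_neg) simp_all
qed (auto intro: Hb_lim)

lemma Sb2: "x > 0 \<Longrightarrow> Hb 2 x < 0"
proof (rule tail_neg[where H="Hb 2" and x=x and a=0 and H'="\<lambda>x. exp (- (x\<^sup>2) / 2) * ((2 * (1 + 2) - (2 - 2) * x\<^sup>2) / (x\<^sup>2 * (1 + 2 + x\<^sup>2)\<^sup>2))"])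
  fix t :: real assume "t > 0"
  then show "(Hb 2 has_real_derivative exp (- (t\<^sup>2) / 2) * ((2 * (1 + 2) - (2 - 2) * t\<^sup>2) / (t\<^sup>2 * (1 + 2 + t\<^sup>2)\<^sup>2))) (at t)"
    by (intro Hb_deriv) simp_all
  have "0 \<le> t\<^sup>2" by simp
  then have "1 + 2 + t\<^sup>2 > 0" by linarith
  then have "(2 * (1 + 2) - (2 - 2) * t\<^sup>2) / (t\<^sup>2 * (1 + 2 + t\<^sup>2)\<^sup>2) > 0"
    using \<open>t > 0\<close> by (intro divide_pos_pos) simp_all
  then show "exp (- (t\<^sup>2) / 2) * ((2 * (1 + 2) - (2 - 2) * t\<^sup>2) / (t\<^sup>2 * (1 + 2 + t\<^sup>2)\<^sup>2)) > 0"
    by (intro mult_pos_pos) simp_all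
qed (auto intro: Hb_lim)

lemma Sa:
  assumes a: "0 < a" "a < 1"
  shows "\<exists>c>0. (\<forall>x. 0 < x \<and> x < c \<longrightarrow> Ha a x > 0) \<and> (\<forall>x. c < x \<longrightarrow> Ha a x < 0)"
proof -
  define x0 where "x0 = sqrt (a * (1 + a) / (1 - a))"
  define D where "D x = exp (- (x\<^sup>2) / 2) * ((x\<^sup>2 * (1 - a) - a * (1 + a)) / (a + x\<^sup>2)\<^sup>2)" for x
  have q: "a * (1 + a) / (1 - a) > 0" using a by simp
  have x0pos: "x0 > 0" using q by (simp add: x0_def)
  have x0sq: "x0\<^sup>2 = a * (1 + a) / (1 - a)" using q by (simp add: x0_def)
  have apos: "a + x\<^sup>2 > 0" for x :: real
  proof -
    have "0 \<le> x\<^sup>2" by simp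
    then show ?thesis using a by linarith
  qed
  have der: "(Ha a has_real_derivative D x) (at x)" for x
    unfolding D_def by (rule Ha_deriv) (use apos[of x] in simp)
  have cont: "isCont (Ha a) x" for x using der[of x] by (rule DERIV_isCont)
  have Dneg: "D x < 0" if "0 \<le> x" "x < x0" for x
  proof -
    have "x\<^sup>2 < x0\<^sup>2" using that by (simp add: power_strict_mono)
    then have "x\<^sup>2 * (1 - a) < a * (1 + a)" using a x0sq by (simp add: pos_less_divide_eq)
    then show ?thesis unfolding D_def using apos[of x]
      by (intro mult_pos_neg divide_neg_pos) simp_all
  qed
  have Dpos: "D x > 0" if "x0 < x" for x
  proof -
    have "x0\<^sup>2 < x\<^sup>2" using that x0pos by (simp add: power_strict_mono)
    then have "x\<^sup>2 * (1 - a) > a * (1 + a)" using a x0sq by (simp add: pos_divide_less_eq)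
    then show ?thesis unfolding D_def using apos[of x]
      by (intro mult_pos_pos divide_pos_pos) simp_all
  qed
  have tail: "Ha a x < 0" if "x0 < x" for x
    by (rule tail_neg[where H="Ha a" and x=x and a=x0 and H'=D]) (use der Dpos Ha_lim that in auto)
  have h0: "Ha a 0 > 0" using mills_pos[of 0] by (simp add: Ha_def)
  obtain c where c: "0 \<le> c" "c \<le> x0 + 1" "Ha a c = 0"
    using IVT2[where f="Ha a" and a=0 and b="x0+1" and y=0] tail[of "x0+1"] h0 cont x0pos by force
  have "c \<noteq> 0" using h0 c by auto
  then have cpos: "c > 0" using c by simp
  have cle: "c \<le> x0"
  proof (rule ccontr)
    assume "\<not> c \<le> x0" then have "Ha a c < 0" using tail by simp
    then show False using c by simp
  qed
  have dec: "Ha a v < Ha a u" if "0 \<le> u" "u < v" "v \<le> x0" for u v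
  proof (rule DERIV_neg_imp_decreasing_open[OF that(2)])
    show "continuous_on {u..v} (Ha a)" by (intro continuous_at_imp_continuous_on ballI cont)
    fix t assume "u < t" "t < v"
    then show "\<exists>y. DERIV (Ha a) t :> y \<and> y < 0" using der Dneg that by (intro exI[of _ "D t"]) auto
  qed
  show ?thesis
  proof (intro exI[of _ c] conjI allI impI cpos)
    fix x assume "0 < x \<and> x < c"
    then show "Ha a x > 0" using dec[of x c] c cle by simp
  next
    fix x assume "c < x"
    show "Ha a x < 0"
    proof (cases "x \<le> x0")
      case True then show ?thesis using dec[of c x] c \<open>c < x\<close> by simp
    next
      case False then show ?thesis using tail by simp
    qed
  qed
qed

lemma Sb:
  assumes a: "0 < a" "a < 2"
  shows "\<exists>c>0. (\<forall>x. 0 < x \<and> x < c \<longrightarrow> Hb a x < 0) \<and> (\<forall>x. c < x \<longrightarrow> Hb a x > 0)"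
proof -
  define x1 where "x1 = sqrt (a * (1 + a) / (2 - a))"
  define D where "D x = exp (- (x\<^sup>2) / 2) * ((a * (1 + a) - (2 - a) * x\<^sup>2) / (x\<^sup>2 * (1 + a + x\<^sup>2)\<^sup>2))" for x
  define k where "k x = x * (1 + a + x\<^sup>2) * mills x - (a + x\<^sup>2)" for x
  have q: "a * (1 + a) / (2 - a) > 0" using a by simp
  have x1pos: "x1 > 0" using q by (simp add: x1_def)
  have x1sq: "x1\<^sup>2 = a * (1 + a) / (2 - a)" using q by (simp add: x1_def)
  have epos: "1 + a + x\<^sup>2 > 0" for x :: real
  proof -
    have "0 \<le> x\<^sup>2" by simp
    then show ?thesis using a by linarith
  qed
  have der: "(Hb a has_real_derivative D x) (at x)" if "x > 0" for x
    unfolding D_def by (rule Hb_deriv) (use a that in simp_all)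
  have cont: "isCont (Hb a) x" if "x > 0" for x using der[OF that] by (rule DERIV_isCont)
  have Dpos: "D x > 0" if "0 < x" "x < x1" for x
  proof -
    have "x\<^sup>2 < x1\<^sup>2" using that by (simp add: power_strict_mono)
    then have "x\<^sup>2 * (2 - a) < a * (1 + a)" using a x1sq by (simp add: pos_less_divide_eq)
    then show ?thesis unfolding D_def using epos[of x] that
      by (intro mult_pos_pos divide_pos_pos) (simp_all add: algebra_simps)
  qed
  have Dneg: "D x < 0" if "x1 < x" for x
  proof -
    have "x1\<^sup>2 < x\<^sup>2" using that x1pos by (simp add: power_strict_mono)
    then have "x\<^sup>2 * (2 - a) > a * (1 + a)" using a x1sq by (simp add: pos_divide_less_eq)
    then show ?thesis unfolding D_def using epos[of x] that x1pos
      by (intro mult_pos_neg divide_neg_pos) (simp_all add: algebra_simps)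
  qed
  have tail: "Hb a x > 0" if "x1 < x" for x
    by (rule tail_pos[where H="Hb a" and x=x and a=x1 and H'=D]) (use der Dneg Hb_lim that x1pos in auto)
  have kc: "isCont k 0"
    unfolding k_def[abs_def] by (intro continuous_intros DERIV_isCont[OF mills_deriv])
  have "k 0 < 0" using a by (simp add: k_def)
  then have "\<forall>\<^sub>F x in at 0. k x < 0"
    using kc unfolding isCont_def by (rule order_tendstoD(2)[rotated])
  then obtain d where d: "d > 0" "\<And>x. x \<noteq> 0 \<Longrightarrow> dist x 0 < d \<Longrightarrow> k x < 0"
    unfolding eventually_at by auto
  define e where "e = min (d / 2) (x1 / 2)"
  have epos': "e > 0" "e < x1" using d x1pos by (auto simp: e_def)
  have "k e < 0" using d epos' by (intro d(2)) (auto simp: e_def)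
  then have "mills e * (e * (1 + a + e\<^sup>2)) < a + e\<^sup>2" by (simp add: k_def mult_ac)
  then have "mills e < (a + e\<^sup>2) / (e * (1 + a + e\<^sup>2))"
    using epos[of e] epos' by (simp add: pos_less_divide_eq)
  then have "exp (e\<^sup>2 / 2) * Hb a e < 0" using exp_Hb[of e a] by simp
  then have he: "Hb a e < 0" by (simp add: mult_less_0_iff)
  obtain c where c: "e \<le> c" "c \<le> x1 + 1" "Hb a c = 0"
    using IVT[where f="Hb a" and a=e and b="x1+1" and y=0] tail[of "x1+1"] he cont epos' by force
  have "c \<noteq> e" using he c by auto
  then have cpos: "c > 0" using c epos' by simp
  have cle: "c \<le> x1"
  proof (rule ccontr)
    assume "\<not> c \<le> x1" then have "Hb a c > 0" using tail by simp
    then show False using c by simp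
  qed
  have inc: "Hb a u < Hb a v" if "0 < u" "u < v" "v \<le> x1" for u v
  proof (rule DERIV_pos_imp_increasing_open[OF that(2)])
    show "continuous_on {u..v} (Hb a)" by (intro continuous_at_imp_continuous_on ballI cont) (use that in auto)
    fix t assume "u < t" "t < v"
    then show "\<exists>y. DERIV (Hb a) t :> y \<and> y > 0" using der Dpos that by (intro exI[of _ "D t"]) auto
  qed
  show ?thesis
  proof (intro exI[of _ c] conjI allI impI cpos)
    fix x assume "0 < x \<and> x < c"
    then show "Hb a x < 0" using inc[of x c] c cle by simp
  next
    fix x assume "c < x"
    show "Hb a x > 0"
    proof (cases "x \<le> x1")
      case True then show ?thesis using inc[of c x] c cpos \<open>c < x\<close> by simp
    next
      case False then show ?thesis using tail by simp
    qed
  qed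
qed

lemma fa_mono_on:
  assumes "a \<ge> 0" "S \<subseteq> {0<..}" "\<And>x y t. x \<in> S \<Longrightarrow> y \<in> S \<Longrightarrow> x < t \<Longrightarrow> t < y \<Longrightarrow> Ha a t > 0"
  shows "strict_mono_on S (\<lambda>x. x powr a * mills x)"
  apply (rule smono_deriv[where f'="\<lambda>x. x powr (a - 1) * (a + x\<^sup>2) * exp (x\<^sup>2 / 2) * Ha a x"])
  subgoal for x y t by (rule fa_deriv[OF _ assms(1)]) (use assms(2) in force)
  subgoal for x y t by (rule mult_pos_pos[OF fa_sign[OF _ assms(1)] assms(3)[of x y t]]) (use assms(2) in force)+
  done

lemma fa_antimono_on:
  assumes "a \<ge> 0" "S \<subseteq> {0<..}" "\<And>x y t. x \<in> S \<Longrightarrow> y \<in> S \<Longrightarrow> x < t \<Longrightarrow> t < y \<Longrightarrow> Ha a t < 0"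
  shows "strict_antimono_on S (\<lambda>x. x powr a * mills x)"
  apply (rule santimono_deriv[where f'="\<lambda>x. x powr (a - 1) * (a + x\<^sup>2) * exp (x\<^sup>2 / 2) * Ha a x"])
  subgoal for x y t by (rule fa_deriv[OF _ assms(1)]) (use assms(2) in force)
  subgoal for x y t by (rule mult_pos_neg[OF fa_sign[OF _ assms(1)] assms(3)[of x y t]]) (use assms(2) in force)+
  done

lemma fb_mono_on:
  assumes "a \<ge> 0" "S \<subseteq> {0<..}" "\<And>x y t. x \<in> S \<Longrightarrow> y \<in> S \<Longrightarrow> x < t \<Longrightarrow> t < y \<Longrightarrow> Hb a t > 0"
  shows "strict_mono_on S (\<lambda>x. x powr a * (deriv mills) x)"
  apply (rule smono_deriv[where f'="\<lambda>x. x powr (a - 1) * (x * (1 + a + x\<^sup>2)) * exp (x\<^sup>2 / 2) * Hb a x"])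
  subgoal for x y t by (rule fb_deriv[OF _ assms(1)]) (use assms(2) in force)
  subgoal for x y t by (rule mult_pos_pos[OF fb_sign[OF _ assms(1)] assms(3)[of x y t]]) (use assms(2) in force)+
  done

lemma fb_antimono_on:
  assumes "a \<ge> 0" "S \<subseteq> {0<..}" "\<And>x y t. x \<in> S \<Longrightarrow> y \<in> S \<Longrightarrow> x < t \<Longrightarrow> t < y \<Longrightarrow> Hb a t < 0"
  shows "strict_antimono_on S (\<lambda>x. x powr a * (deriv mills) x)"
  apply (rule santimono_deriv[where f'="\<lambda>x. x powr (a - 1) * (x * (1 + a + x\<^sup>2)) * exp (x\<^sup>2 / 2) * Hb a x"])
  subgoal for x y t by (rule fb_deriv[OF _ assms(1)]) (use assms(2) in force)
  subgoal for x y t by (rule mult_pos_neg[OF fb_sign[OF _ assms(1)] assms(3)[of x y t]]) (use assms(2) in force)+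
  done

theorem proposition9:
  shows "(strict_antimono_on {0<..} (\<lambda>x. x powr 0 * mills x)
        \<and> strict_mono_on {0<..} (\<lambda>x. x powr 1 * mills x)
        \<and> (\<forall>\<alpha>::real. 0 < \<alpha> \<and> \<alpha> < 1 \<longrightarrow>
             (\<exists>c>0. strict_mono_on {0<..c} (\<lambda>x. x powr \<alpha> * mills x)
                  \<and> strict_antimono_on {c..} (\<lambda>x. x powr \<alpha> * mills x))))
      \<and> (strict_mono_on {0<..} (\<lambda>x. x powr 0 * deriv mills x)
        \<and> strict_antimono_on {0<..} (\<lambda>x. x powr 2 * deriv mills x)
        \<and> (\<forall>\<alpha>::real. 0 < \<alpha> \<and> \<alpha> < 2 \<longrightarrow>
             (\<exists>c>0. strict_antimono_on {0<..c} (\<lambda>x. x powr \<alpha> * deriv mills x)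
                  \<and> strict_mono_on {c..} (\<lambda>x. x powr \<alpha> * deriv mills x))))"
proof -
  have a0: "strict_antimono_on {0<..} (\<lambda>x. x powr 0 * mills x)"
    by (rule fa_antimono_on) (auto intro: Sa0)
  have a1: "strict_mono_on {0<..} (\<lambda>x. x powr 1 * mills x)"
    by (rule fa_mono_on) (auto intro: Sa1)
  have a2: "\<exists>c>0. strict_mono_on {0<..c} (\<lambda>x. x powr \<alpha> * mills x)
                  \<and> strict_antimono_on {c..} (\<lambda>x. x powr \<alpha> * mills x)"
    if asm: "0 < \<alpha> \<and> \<alpha> < 1" for \<alpha> :: real
  proof -
    obtain c where c: "c > 0" "\<forall>x. 0 < x \<and> x < c \<longrightarrow> Ha \<alpha> x > 0" "\<forall>x. c < x \<longrightarrow> Ha \<alpha> x < 0"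
      using Sa[of \<alpha>] asm by auto
    have "strict_mono_on {0<..c} (\<lambda>x. x powr \<alpha> * mills x)"
      by (rule fa_mono_on) (use asm c in auto)
    moreover have "strict_antimono_on {c..} (\<lambda>x. x powr \<alpha> * mills x)"
      by (rule fa_antimono_on) (use asm c in auto)
    ultimately show ?thesis using c by blast
  qed
  have b0: "strict_mono_on {0<..} (\<lambda>x. x powr 0 * deriv mills x)"
    by (rule fb_mono_on) (auto intro: Sb0)
  have b1: "strict_antimono_on {0<..} (\<lambda>x. x powr 2 * deriv mills x)"
    by (rule fb_antimono_on) (auto intro: Sb2)
  have b2: "\<exists>c>0. strict_antimono_on {0<..c} (\<lambda>x. x powr \<alpha> * deriv mills x)
                  \<and> strict_mono_on {c..} (\<lambda>x. x powr \<alpha> * deriv mills x)"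
    if asm: "0 < \<alpha> \<and> \<alpha> < 2" for \<alpha> :: real
  proof -
    obtain c where c: "c > 0" "\<forall>x. 0 < x \<and> x < c \<longrightarrow> Hb \<alpha> x < 0" "\<forall>x. c < x \<longrightarrow> Hb \<alpha> x > 0"
      using Sb[of \<alpha>] asm by auto
    have "strict_antimono_on {0<..c} (\<lambda>x. x powr \<alpha> * deriv mills x)"
      by (rule fb_antimono_on) (use asm c in auto)
    moreover have "strict_mono_on {c..} (\<lambda>x. x powr \<alpha> * deriv mills x)"
      by (rule fb_mono_on) (use asm c in auto)
    ultimately show ?thesis using c by blast
  qed
  show ?thesis using a0 a1 a2 b0 b1 b2 by blast
qed

end
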